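(* Let a target $T$ be fixed at a point $(x_T,y_T)\in\mathbb{R}^2$, and consider a UAV with dynamics $\dot x=V\cos\psi$, $\dot y=V\sin\psi$, $\dot\psi=\omega$, $V>0$ constant. Let $r(t)$ be the distance from the UAV to $T$ and $\theta(t)\in[0,2\pi)$ the bearing angle. Let $r_d>0$ be a desired radius, let $k>\frac{1}{r_d}$, let $r_a=\sqrt{r_d^2-\frac{1}{k^2}}$, and let the control input be $$\omega=\begin{cases} k\left[V\cos\!\left(\pi-\sin^{-1}\!\left(\frac{r_a}{r(t)}\right)\right)-\dot r(t)\right], & r(t)\ge r_a,\\ 0,&\text{otherwise}.\end{cases}$$ Then, for every initial condition, $r(t)\to r_d$ and $\theta(t)\to\frac{\pi}{2}$ as $t\to\infty$.
   Context: The bearing angle $\theta(t)\in[0,2\pi)$ is the angle measured counterclockwise from the vector pointing from the UAV's current position to $T$ to the UAV's current heading $(\cos\psi,\sin\psi)$. In these variables the dynamics read $\dot r=-V\cos\theta$, $\dot\theta=\omega+\frac{V\sin\theta}{r}$. $\sin^{-1}$ is the principal arcsine. *)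

theory Defs
  imports "HOL-Analysis.Analysis"
begin

definition uav_range :: "real \<Rightarrow> real \<Rightarrow> real \<Rightarrow> real \<Rightarrow> real" where
  "uav_range xT yT px py = sqrt ((px - xT)^2 + (py - yT)^2)"

text \<open>Bearing angle in [0, 2 pi): angle measured counterclockwise from the vector
  pointing from the UAV (px, py) to the target (xT, yT) to the heading (cos psi, sin psi).\<close>
definition bearing :: "real \<Rightarrow> real \<Rightarrow> real \<Rightarrow> real \<Rightarrow> real \<Rightarrow> real" where
  "bearing xT yT px py psi =
     (let a = Arg (cis psi / Complex (xT - px) (yT - py)) in
      if a < 0 then a + 2 * pi else a)"

definition control :: "real \<Rightarrow> real \<Rightarrow> real \<Rightarrow> real \<Rightarrow> real \<Rightarrow> real" where
  "control V k rd r rdot =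
     (let ra = sqrt (rd^2 - 1 / k^2) in
      if r \<ge> ra then k * (V * cos (pi - arcsin (ra / r)) - rdot) else 0)"

end

theory Submission
  imports Defs
begin

lemma mvt_le:
  fixes f f' :: "real \<Rightarrow> real"
  assumes "a \<le> b" "continuous_on {a..b} f"
    "\<And>x. a < x \<Longrightarrow> x < b \<Longrightarrow> (f has_real_derivative f' x) (at x)"
    "\<And>x. a < x \<Longrightarrow> x < b \<Longrightarrow> f' x \<le> M"
  shows "f b - f a \<le> M * (b - a)"
proof (cases "a = b")
  case True then show ?thesis by simp
next
  case False
  then have "a < b" using assms(1) by simp
  from MVT[OF this assms(2)] assms(3) obtain l z where
    z: "a < z" "z < b" "DERIV f z :> l" "f b - f a = (b - a) * l"
    by (meson real_differentiable_def)
  have "l = f' z" using DERIV_unique[OF z(3) assms(3)[OF z(1,2)]] .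
  with assms(4)[OF z(1,2)] z(4) \<open>a < b\<close> show ?thesis
    by (simp add: mult.commute mult_right_mono)
qed

lemma mvt_ge:
  fixes f f' :: "real \<Rightarrow> real"
  assumes "a \<le> b" "continuous_on {a..b} f"
    "\<And>x. a < x \<Longrightarrow> x < b \<Longrightarrow> (f has_real_derivative f' x) (at x)"
    "\<And>x. a < x \<Longrightarrow> x < b \<Longrightarrow> M \<le> f' x"
  shows "M * (b - a) \<le> f b - f a"
proof -
  have "(-f) b - (-f) a \<le> (-M) * (b - a)"
    by (rule mvt_le[where f'="\<lambda>x. - f' x"])
       (use assms in \<open>auto intro!: derivative_eq_intros continuous_intros\<close>)
  then show ?thesis by simp
qed

lemma nbhd_lt:
  fixes f :: "real \<Rightarrow> real"
  assumes "isCont f c" "f c < L"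
  shows "\<exists>d>0. \<forall>t. \<bar>t - c\<bar> < d \<longrightarrow> f t < L"
proof -
  have "(\<lambda>t. f t - L) \<midarrow>c\<rightarrow> f c - L"
    using assms(1) by (intro tendsto_intros) (simp add: isCont_def)
  from LIM_fun_less_zero[OF this] assms(2) obtain d where
    d: "d > 0" "\<forall>t. t \<noteq> c \<and> \<bar>c - t\<bar> < d \<longrightarrow> f t - L < 0" by auto
  show ?thesis
  proof (intro exI conjI allI impI)
    show "d > 0" by fact
    fix t assume "\<bar>t - c\<bar> < d"
    then show "f t < L" using d assms(2) by (cases "t = c") (auto simp: abs_minus_commute)
  qed
qed

lemma nbhd_gt:
  fixes f :: "real \<Rightarrow> real"
  assumes "isCont f c" "L < f c"
  shows "\<exists>d>0. \<forall>t. \<bar>t - c\<bar> < d \<longrightarrow> L < f t"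
proof -
  have "isCont (\<lambda>t. - f t) c" using assms(1) by (intro continuous_intros)
  from nbhd_lt[OF this, of "-L"] assms(2) show ?thesis by auto
qed

lemma first_time:
  fixes f :: "real \<Rightarrow> real"
  assumes cont: "\<And>t. t \<ge> a \<Longrightarrow> isCont f t" and fa: "f a < c"
    and ex: "\<exists>t\<ge>a. c \<le> f t"
  shows "\<exists>te>a. f te = c \<and> (\<forall>t. a \<le> t \<and> t < te \<longrightarrow> f t < c)"
proof -
  define S where "S = {t. a \<le> t \<and> c \<le> f t}"
  define te where "te = Inf S"
  have ne: "S \<noteq> {}" using ex S_def by auto
  have bdd: "bdd_below S" unfolding S_def by (rule bdd_belowI[of _ a]) auto
  have lb: "\<And>s. s \<in> S \<Longrightarrow> te \<le> s" using cInf_lower[OF _ bdd] te_def by auto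
  have gea: "a \<le> te" unfolding te_def using ne by (rule cInf_greatest) (auto simp: S_def)
  have before: "\<And>t. a \<le> t \<Longrightarrow> t < te \<Longrightarrow> f t < c"
  proof -
    fix t assume "a \<le> t" "t < te"
    show "f t < c"
    proof (rule ccontr)
      assume "\<not> f t < c"
      then have "t \<in> S" using \<open>a \<le> t\<close> S_def by auto
      then show False using lb \<open>t < te\<close> by force
    qed
  qed
  have fte_ge: "c \<le> f te"
  proof (rule ccontr)
    assume "\<not> c \<le> f te"
    then have "f te < c" by simp
    from nbhd_lt[OF cont[OF gea] this] obtain d where
      d: "d > 0" "\<forall>t. \<bar>t - te\<bar> < d \<longrightarrow> f t < c" by auto
    have "te + d \<le> te"
    proof -
      have "te + d \<le> Inf S"
      proof (rule cInf_greatest[OF ne])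
        fix s assume s: "s \<in> S"
        then have h: "te \<le> s" "c \<le> f s" using lb S_def by auto
        have "\<not> \<bar>s - te\<bar> < d"
        proof
          assume "\<bar>s - te\<bar> < d"
          then have "f s < c" using d(2) by blast
          then show False using h(2) by simp
        qed
        then show "te + d \<le> s" using h(1) by (simp add: abs_of_nonneg)
      qed
      then show ?thesis using te_def by simp
    qed
    then show False using d by simp
  qed
  have gt: "te > a" using gea fte_ge fa by (cases "te = a") auto
  have fte_le: "f te \<le> c"
  proof (rule ccontr)
    assume "\<not> f te \<le> c"
    then have "c < f te" by simp
    from nbhd_gt[OF cont[OF gea] this] obtain d where
      d: "d > 0" "\<forall>t. \<bar>t - te\<bar> < d \<longrightarrow> c < f t" by auto
    define t where "t = max a (te - d/2)"
    have h: "a \<le> t" "t < te" "\<bar>t - te\<bar> < d" using gt d unfolding t_def by auto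
    have "c < f t" using d(2) h(3) by blast
    moreover have "f t < c" using before h(1,2) by blast
    ultimately show False by simp
  qed
  show ?thesis using gt fte_ge fte_le before by (intro exI[of _ te]) auto
qed

lemma lip:
  fixes f f' :: "real \<Rightarrow> real"
  assumes d: "\<And>t. t \<ge> T0 \<Longrightarrow> (f has_real_derivative f' t) (at t)"
    and b: "\<And>t. t \<ge> T0 \<Longrightarrow> \<bar>f' t\<bar> \<le> M"
    and st: "s \<ge> T0" "t \<ge> T0"
  shows "\<bar>f s - f t\<bar> \<le> M * \<bar>s - t\<bar>"
proof -
  have gen: "\<bar>f v - f u\<bar> \<le> M * (v - u)" if uv: "T0 \<le> u" "u \<le> v" for u v
  proof -
    have c: "continuous_on {u..v} f"
    proof (intro continuous_at_imp_continuous_on ballI)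
      fix x assume "x \<in> {u..v}"
      then have "T0 \<le> x" using uv by simp
      then show "isCont f x" using d DERIV_isCont by blast
    qed
    have "f v - f u \<le> M * (v - u)"
    proof (rule mvt_le[OF uv(2) c, where f'=f'])
      fix x assume "u < x" "x < v"
      then have x: "T0 \<le> x" using uv by simp
      show "(f has_real_derivative f' x) (at x)" using d[OF x] .
      show "f' x \<le> M" using b[OF x] by simp
    qed
    moreover have "(-M) * (v - u) \<le> f v - f u"
    proof (rule mvt_ge[OF uv(2) c, where f'=f'])
      fix x assume "u < x" "x < v"
      then have x: "T0 \<le> x" using uv by simp
      show "(f has_real_derivative f' x) (at x)" using d[OF x] .
      show "-M \<le> f' x" using b[OF x] by simp
    qed
    ultimately show ?thesis by (simp add: abs_le_iff)
  qed
  show ?thesis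
  proof (cases "t \<le> s")
    case True then show ?thesis using gen[OF st(2) True] by simp
  next
    case False then show ?thesis using gen[OF st(1), of t] by (simp add: abs_minus_commute)
  qed
qed

lemma dist3: "dist (a::real, b::real, c::real) (a', b', c') \<le> \<bar>a - a'\<bar> + \<bar>b - b'\<bar> + \<bar>c - c'\<bar>"
proof -
  have h1: "dist (a, b, c) (a', b', c') \<le> \<bar>dist a a'\<bar> + \<bar>dist (b, c) (b', c')\<bar>"
    unfolding dist_Pair_Pair[of a "(b,c)"] by (rule sqrt_sum_squares_le_sum_abs)
  have h2: "dist (b, c) (b', c') \<le> \<bar>dist b b'\<bar> + \<bar>dist c c'\<bar>"
    unfolding dist_Pair_Pair[of b c] by (rule sqrt_sum_squares_le_sum_abs)
  show ?thesis using h1 h2 by (simp add: dist_real_def)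
qed

lemma uc_comp:
  fixes Phi :: "real \<times> real \<times> real \<Rightarrow> real" and a b c :: "real \<Rightarrow> real"
  assumes cont: "continuous_on K Phi" and K: "compact K"
    and inK: "\<And>t. t \<ge> T0 \<Longrightarrow> (a t, b t, c t) \<in> K"
    and M: "M \<ge> 0"
    and la: "\<And>s t. s \<ge> T0 \<Longrightarrow> t \<ge> T0 \<Longrightarrow> \<bar>a s - a t\<bar> \<le> M * \<bar>s - t\<bar>"
    and lb: "\<And>s t. s \<ge> T0 \<Longrightarrow> t \<ge> T0 \<Longrightarrow> \<bar>b s - b t\<bar> \<le> M * \<bar>s - t\<bar>"
    and lc: "\<And>s t. s \<ge> T0 \<Longrightarrow> t \<ge> T0 \<Longrightarrow> \<bar>c s - c t\<bar> \<le> M * \<bar>s - t\<bar>"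
  shows "\<forall>e>0. \<exists>d>0. \<forall>s t. T0 \<le> s \<longrightarrow> T0 \<le> t \<longrightarrow> \<bar>s - t\<bar> < d \<longrightarrow>
           \<bar>Phi (a s, b s, c s) - Phi (a t, b t, c t)\<bar> < e"
proof (intro allI impI)
  fix e :: real assume e: "e > 0"
  have "uniformly_continuous_on K Phi" using compact_uniformly_continuous[OF cont K] .
  then obtain d where d: "d > 0" "\<forall>x\<in>K. \<forall>x'\<in>K. dist x' x < d \<longrightarrow> dist (Phi x') (Phi x) < e"
    unfolding uniformly_continuous_on_def using e by blast
  define del where "del = d / (3 * M + 1)"
  have delp: "del > 0" using d M del_def by simp
  show "\<exists>d>0. \<forall>s t. T0 \<le> s \<longrightarrow> T0 \<le> t \<longrightarrow> \<bar>s - t\<bar> < d \<longrightarrow>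
           \<bar>Phi (a s, b s, c s) - Phi (a t, b t, c t)\<bar> < e"
  proof (intro exI[of _ del] conjI allI impI delp)
    fix s t assume st: "T0 \<le> s" "T0 \<le> t" "\<bar>s - t\<bar> < del"
    have "dist (a s, b s, c s) (a t, b t, c t) \<le> \<bar>a s - a t\<bar> + \<bar>b s - b t\<bar> + \<bar>c s - c t\<bar>"
      by (rule dist3)
    also have "\<dots> \<le> 3 * M * \<bar>s - t\<bar>" using la[OF st(1,2)] lb[OF st(1,2)] lc[OF st(1,2)] by simp
    also have "\<dots> \<le> 3 * M * del" using st(3) M by (intro mult_left_mono) auto
    also have "\<dots> < d"
    proof -
      have "3 * M * del < (3 * M + 1) * del" using delp by simp
      also have "\<dots> = d" using del_def M by simp
      finally show ?thesis .
    qed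
    finally have "dist (a s, b s, c s) (a t, b t, c t) < d" .
    then have "dist (Phi (a s, b s, c s)) (Phi (a t, b t, c t)) < e"
      using d(2) inK st(1,2) by blast
    then show "\<bar>Phi (a s, b s, c s) - Phi (a t, b t, c t)\<bar> < e" by (simp add: dist_real_def)
  qed
qed

lemma barbalat:
  fixes F h :: "real \<Rightarrow> real"
  assumes der: "\<And>t. t \<ge> T0 \<Longrightarrow> (F has_real_derivative h t) (at t)"
    and uc: "\<forall>e>0. \<exists>d>0. \<forall>s t. T0 \<le> s \<longrightarrow> T0 \<le> t \<longrightarrow> \<bar>s - t\<bar> < d \<longrightarrow> \<bar>h s - h t\<bar> < e"
    and cau: "\<forall>e>0. \<exists>T. \<forall>s t. T \<le> s \<longrightarrow> T \<le> t \<longrightarrow> \<bar>F s - F t\<bar> < e"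
  shows "(h \<longlongrightarrow> 0) at_top"
proof (rule tendstoI)
  fix e :: real assume e: "e > 0"
  obtain d where d: "d > 0" "\<forall>s t. T0 \<le> s \<longrightarrow> T0 \<le> t \<longrightarrow> \<bar>s - t\<bar> < d \<longrightarrow> \<bar>h s - h t\<bar> < e/2"
    using uc e by (meson half_gt_zero)
  obtain T where T: "\<forall>s t. T \<le> s \<longrightarrow> T \<le> t \<longrightarrow> \<bar>F s - F t\<bar> < e * d / 4"
    using cau e d by (meson divide_pos_pos mult_pos_pos zero_less_numeral)
  show "eventually (\<lambda>t. dist (h t) 0 < e) at_top"
    unfolding eventually_at_top_linorder
  proof (intro exI[of _ "max T0 T"] allI impI)
    fix t assume t: "t \<ge> max T0 T"
    show "dist (h t) 0 < e"
    proof (rule ccontr)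
      assume "\<not> dist (h t) 0 < e"
      then have ht: "\<bar>h t\<bar> \<ge> e" by simp
      define t' where "t' = t + d/2"
      have tt': "t < t'" using d t'_def by simp
      obtain z where z: "t < z" "z < t'" "F t' - F t = (t' - t) * h z"
        using MVT2[OF tt', of F h] der t by force
      have "\<bar>h z - h t\<bar> < e/2" using d(2) z t t'_def by auto
      then have hz: "\<bar>h z\<bar> > e/2" using ht by linarith
      have "F t' - F t = (d/2) * h z" using z t'_def by simp
      then have "\<bar>F t' - F t\<bar> = \<bar>(d/2) * h z\<bar>" by (rule arg_cong)
      also have "\<dots> = (d/2) * \<bar>h z\<bar>" using d by (simp add: abs_mult)
      finally have "\<bar>F t' - F t\<bar> = (d/2) * \<bar>h z\<bar>" .
      also have "\<dots> \<ge> (d/2) * (e/2)" using hz d by (intro mult_left_mono) auto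
      finally have "\<bar>F t' - F t\<bar> \<ge> e * d / 4" by (simp add: mult.commute)
      moreover have "\<bar>F t' - F t\<bar> < e * d / 4" using T t tt' by auto
      ultimately show False by simp
    qed
  qed
qed

lemma lim_zero_bounded:
  fixes f g :: "real \<Rightarrow> real"
  assumes f: "(f \<longlongrightarrow> 0) at_top" and g: "eventually (\<lambda>t. \<bar>g t\<bar> \<le> B) at_top"
  shows "((\<lambda>t. f t * g t) \<longlongrightarrow> 0) at_top"
proof (rule tendsto_sandwich[where f="\<lambda>t. - (\<bar>f t\<bar> * B)" and h="\<lambda>t. \<bar>f t\<bar> * B"])
  show "eventually (\<lambda>t. - (\<bar>f t\<bar> * B) \<le> f t * g t) at_top"
    using g
  proof (rule eventually_mono)
    fix t assume "\<bar>g t\<bar> \<le> B"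
    then have "\<bar>f t * g t\<bar> \<le> \<bar>f t\<bar> * B" by (simp add: abs_mult mult_left_mono)
    then show "- (\<bar>f t\<bar> * B) \<le> f t * g t" by (simp add: abs_le_iff)
  qed
  show "eventually (\<lambda>t. f t * g t \<le> \<bar>f t\<bar> * B) at_top"
    using g
  proof (rule eventually_mono)
    fix t assume "\<bar>g t\<bar> \<le> B"
    then have "\<bar>f t * g t\<bar> \<le> \<bar>f t\<bar> * B" by (simp add: abs_mult mult_left_mono)
    then show "f t * g t \<le> \<bar>f t\<bar> * B" by (simp add: abs_le_iff)
  qed
  have "((\<lambda>t. \<bar>f t\<bar>) \<longlongrightarrow> 0) at_top" using f by (simp add: tendsto_rabs_zero_iff)
  then show "((\<lambda>t. \<bar>f t\<bar> * B) \<longlongrightarrow> 0) at_top" by (rule tendsto_mult_left_zero)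
  then show "((\<lambda>t. - (\<bar>f t\<bar> * B)) \<longlongrightarrow> 0) at_top" using tendsto_minus by fastforce
qed

locale uav =
  fixes V rd k xT yT :: real
    and x y psi rdot :: "real \<Rightarrow> real"
  assumes hV: "V > 0"
    and hrd: "rd > 0"
    and hk: "k > 1 / rd"
    and hrdot: "\<forall>t\<ge>0. uav_range xT yT (x t) (y t) > 0 \<longrightarrow>
        ((\<lambda>s. uav_range xT yT (x s) (y s)) has_real_derivative rdot t) (at t within {0..})"
    and hx: "\<forall>t\<ge>0. (x has_real_derivative V * cos (psi t)) (at t within {0..})"
    and hy: "\<forall>t\<ge>0. (y has_real_derivative V * sin (psi t)) (at t within {0..})"
    and hpsi: "\<forall>t\<ge>0. (psi has_real_derivative
        control V k rd (uav_range xT yT (x t) (y t)) (rdot t)) (at t within {0..})"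
begin

definition "r t = uav_range xT yT (x t) (y t)"
definition "P t = (xT - x t) * cos (psi t) + (yT - y t) * sin (psi t)"
definition "Q t = (xT - x t) * sin (psi t) - (yT - y t) * cos (psi t)"
definition "ra = sqrt (rd^2 - 1/k^2)"
definition "W t = sqrt ((r t)^2 - ra^2)"
definition "Om t = (if r t \<ge> ra then k * V * (P t - W t) / r t else 0)"

lemma at0: "t > 0 \<Longrightarrow> at t within {0..} = at (t::real)"
  by (rule at_within_interior) simp

lemma kpos: "k > 0" using hk hrd
  by (smt (verit) divide_pos_pos)

lemma krd: "k * rd > 1" using hk hrd kpos
  by (simp add: field_simps)

lemma inv_lt: "1/k^2 < rd^2"
proof -
  have "1 < (k*rd)^2" using krd by (intro one_less_power) simp_all
  then have "1 < k^2 * rd^2" by (simp add: power_mult_distrib)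
  then show ?thesis using kpos by (simp add: field_simps)
qed

lemma ra_sq: "ra^2 = rd^2 - 1/k^2"
  using inv_lt unfolding ra_def by simp

lemma ra_pos: "ra > 0"
  using inv_lt unfolding ra_def by simp

lemma r_sq: "(r t)^2 = (P t)^2 + (Q t)^2"
proof -
  have "(r t)^2 = (x t - xT)^2 + (y t - yT)^2"
    unfolding r_def uav_range_def by simp
  also have "\<dots> = ((x t - xT)^2 + (y t - yT)^2) * ((sin (psi t))^2 + (cos (psi t))^2)"
    by simp
  also have "\<dots> = (P t)^2 + (Q t)^2"
    unfolding P_def Q_def by algebra
  finally show ?thesis .
qed

lemma r_nonneg: "r t \<ge> 0" unfolding r_def uav_range_def by simp

lemma absP: "\<bar>P t\<bar> \<le> r t"
proof -
  have "(P t)^2 \<le> (r t)^2" using r_sq[of t] by simp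
  then show ?thesis using r_nonneg[of t] power2_le_imp_le[of "\<bar>P t\<bar>" "r t"] by simp
qed

lemma absQ: "\<bar>Q t\<bar> \<le> r t"
proof -
  have "(Q t)^2 \<le> (r t)^2" using r_sq[of t] by simp
  then show ?thesis using r_nonneg[of t] power2_le_imp_le[of "\<bar>Q t\<bar>" "r t"] by simp
qed

lemma dx: "t > 0 \<Longrightarrow> (x has_real_derivative V * cos (psi t)) (at t)"
  using hx at0 by (metis less_imp_le)
lemma dy: "t > 0 \<Longrightarrow> (y has_real_derivative V * sin (psi t)) (at t)"
  using hy at0 by (metis less_imp_le)

lemma r_fun: "r = (\<lambda>s. sqrt ((x s - xT)^2 + (y s - yT)^2))"
  unfolding r_def[abs_def] uav_range_def by simp

lemma dr: assumes "t > 0" "r t > 0"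
  shows "(r has_real_derivative - V * P t / r t) (at t)"
proof -
  have pos: "0 < (x t - xT)^2 + (y t - yT)^2" using assms(2) unfolding r_fun by simp
  have d1: "((\<lambda>s. (x s - xT)^2 + (y s - yT)^2) has_real_derivative
      2 * (x t - xT) * (V * cos (psi t)) + 2 * (y t - yT) * (V * sin (psi t))) (at t)"
    by (auto intro!: derivative_eq_intros dx[OF assms(1)] dy[OF assms(1)] simp: algebra_simps)
  have "((\<lambda>s. sqrt ((x s - xT)^2 + (y s - yT)^2)) has_real_derivative
     inverse (sqrt ((x t - xT)^2 + (y t - yT)^2)) / 2 * (2 * (x t - xT) * (V * cos (psi t)) + 2 * (y t - yT) * (V * sin (psi t)))) (at t)"
    using DERIV_chain2[OF DERIV_real_sqrt[OF pos] d1] .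
  moreover have "inverse (sqrt ((x t - xT)^2 + (y t - yT)^2)) / 2 * (2 * (x t - xT) * (V * cos (psi t)) + 2 * (y t - yT) * (V * sin (psi t)))
      = - V * P t / r t"
  proof -
    have s0: "sqrt ((x t - xT)^2 + (y t - yT)^2) \<noteq> 0" using real_sqrt_gt_zero[OF pos] by linarith
    show ?thesis unfolding r_fun P_def using s0 by (simp add: field_simps)
  qed
  ultimately show ?thesis unfolding r_fun by simp
qed

lemma rdot_eq: assumes "t > 0" "r t > 0" shows "rdot t = - V * P t / r t"
proof -
  have "(r has_real_derivative rdot t) (at t within {0..})"
    using hrdot assms unfolding r_def[abs_def] by (simp add: r_def)
  then have "(r has_real_derivative rdot t) (at t)" using at0[OF assms(1)] by simp
  then show ?thesis using dr[OF assms] DERIV_unique by blast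
qed

lemma Om_eq: assumes "t > 0" shows "control V k rd (r t) (rdot t) = Om t"
proof (cases "r t \<ge> ra")
  case True
  then have rp: "r t > 0" using ra_pos by simp
  have le1: "ra / r t \<le> 1" using True rp by simp
  have ge: "-1 \<le> ra / r t" using ra_pos rp
    by (smt (verit) divide_nonneg_pos)
  have "cos (pi - arcsin (ra / r t)) = - sqrt (1 - (ra / r t)^2)"
    using cos_arcsin[OF ge le1] by simp
  also have "1 - (ra / r t)^2 = ((r t)^2 - ra^2) / (r t)^2"
    using rp by (simp add: field_simps)
  also have "- sqrt (\<dots>) = - W t / r t"
    unfolding W_def using rp by (simp add: real_sqrt_divide)
  finally have c: "cos (pi - arcsin (ra / r t)) = - W t / r t" .
  show ?thesis
    unfolding control_def Om_def Let_def ra_def[symmetric]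
    using True c rdot_eq[OF assms rp] rp by (simp add: field_simps)
next
  case False
  then show ?thesis unfolding control_def Om_def Let_def ra_def[symmetric] by simp
qed

lemma dpsi: "t > 0 \<Longrightarrow> (psi has_real_derivative Om t) (at t)"
  using hpsi at0 Om_eq unfolding r_def[abs_def] by (metis less_imp_le)

lemma dP: assumes "t > 0" shows "(P has_real_derivative - V - Om t * Q t) (at t)"
  unfolding P_def[abs_def]
  apply (auto intro!: derivative_eq_intros dx[OF assms] dy[OF assms] dpsi[OF assms] simp: Q_def algebra_simps)
  apply (simp only: distrib_left[symmetric] sin_cos_squared_add3 mult_1_right)
  done

lemma dQ: assumes "t > 0" shows "(Q has_real_derivative Om t * P t) (at t)"
  unfolding Q_def[abs_def]
  by (auto intro!: derivative_eq_intros dx[OF assms] dy[OF assms] dpsi[OF assms] simp: P_def algebra_simps)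

lemma cont_x: "t > 0 \<Longrightarrow> isCont x t" using dx DERIV_isCont by blast
lemma cont_y: "t > 0 \<Longrightarrow> isCont y t" using dy DERIV_isCont by blast
lemma cont_P: "t > 0 \<Longrightarrow> isCont P t" using dP DERIV_isCont by blast
lemma cont_Q: "t > 0 \<Longrightarrow> isCont Q t" using dQ DERIV_isCont by blast
lemma cont_r: "t > 0 \<Longrightarrow> isCont r t"
  unfolding r_fun by (intro continuous_intros cont_x cont_y)
lemma W_fun: "W = (\<lambda>s. sqrt ((r s)^2 - ra^2))" by (simp add: W_def[abs_def])
lemma cont_W: "t > 0 \<Longrightarrow> isCont W t"
  unfolding W_fun by (intro continuous_intros cont_r)

lemma cont_on:
  fixes a b :: real and f :: "real \<Rightarrow> real"
  assumes "a > 0" "\<And>t. t > 0 \<Longrightarrow> isCont f t"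
  shows "continuous_on {a..b} f"
proof (rule continuous_at_imp_continuous_on, rule ballI)
  fix t assume "t \<in> {a..b}"
  then have "a \<le> t" by simp
  then have "t > 0" using assms(1) by linarith
  then show "isCont f t" by (rule assms(2))
qed

lemma Om_A: "ra \<le> r t \<Longrightarrow> Om t = k * V * (P t - W t) / r t" by (simp add: Om_def)
lemma Om_B: "r t < ra \<Longrightarrow> Om t = 0" by (simp add: Om_def)

lemma W_nonneg: "ra \<le> r t \<Longrightarrow> 0 \<le> W t"
proof -
  assume "ra \<le> r t"
  then have "ra^2 \<le> (r t)^2" using ra_pos by (intro power_mono) auto
  then show ?thesis unfolding W_def by simp
qed

lemma W_le: "ra \<le> r t \<Longrightarrow> W t \<le> r t"
proof -
  assume h: "ra \<le> r t"
  have "(r t)^2 - ra^2 \<le> (r t)^2" by simp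
  then have "W t \<le> sqrt ((r t)^2)" unfolding W_def by (rule real_sqrt_le_mono)
  then show ?thesis using r_nonneg[of t] by simp
qed

lemma W_pos: "ra < r t \<Longrightarrow> 0 < W t"
proof -
  assume "ra < r t"
  then have "ra^2 < (r t)^2" using ra_pos by (intro power_strict_mono) auto
  then show ?thesis unfolding W_def by simp
qed

lemma Om_bound: "\<bar>Om t\<bar> \<le> 2 * k * V"
proof (cases "ra \<le> r t")
  case True
  have rp: "r t > 0" using True ra_pos by simp
  have "\<bar>P t - W t\<bar> \<le> 2 * r t" using absP[of t] W_nonneg[OF True] W_le[OF True] by linarith
  then have "\<bar>P t - W t\<bar> / r t \<le> 2" using rp by (simp add: divide_le_eq)
  then have "k * V * (\<bar>P t - W t\<bar> / r t) \<le> k * V * 2"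
    using kpos hV by (intro mult_left_mono) auto
  moreover have "\<bar>Om t\<bar> = k * V * (\<bar>P t - W t\<bar> / r t)"
    using Om_A[OF True] kpos hV rp by (simp add: abs_mult abs_divide)
  ultimately show ?thesis by simp
next
  case False then show ?thesis using Om_B[of t] kpos hV by simp
qed

lemma dW: assumes "t > 0" "ra < r t"
  shows "(W has_real_derivative - V * P t / W t) (at t)"
proof -
  have rp: "r t > 0" using assms ra_pos by simp
  have pos: "0 < (r t)^2 - ra^2" using W_pos[OF assms(2)] unfolding W_def by simp
  have d1: "((\<lambda>s. (r s)^2 - ra^2) has_real_derivative 2 * r t * (- V * P t / r t)) (at t)"
    by (auto intro!: derivative_eq_intros dr[OF assms(1) rp])
  have "(W has_real_derivative inverse (sqrt ((r t)^2 - ra^2)) / 2 * (2 * r t * (- V * P t / r t))) (at t)"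
    unfolding W_fun using DERIV_chain2[OF DERIV_real_sqrt[OF pos] d1] .
  moreover have "inverse (sqrt ((r t)^2 - ra^2)) / 2 * (2 * r t * (- V * P t / r t)) = - V * P t / W t"
    using rp W_pos[OF assms(2)] unfolding W_def[symmetric] by (simp add: field_simps)
  ultimately show ?thesis by simp
qed

lemma exitX: assumes "s \<ge> 1" "ra \<le> r s" "P s < 0"
  shows "\<exists>t1>s. ra < r t1 \<and> P t1 < W t1"
proof -
  have sp: "s > 0" using assms(1) by simp
  have rsp: "0 < r s" using assms(2) ra_pos by simp
  from nbhd_lt[OF cont_P[OF sp] assms(3)] obtain d1 where
    d1: "d1 > 0" "\<forall>t. \<bar>t - s\<bar> < d1 \<longrightarrow> P t < 0" by auto
  from nbhd_gt[OF cont_r[OF sp] rsp] obtain d2 where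
    d2: "d2 > 0" "\<forall>t. \<bar>t - s\<bar> < d2 \<longrightarrow> 0 < r t" by auto
  define t1 where "t1 = s + min d1 d2 / 2"
  have t1s: "s < t1" using d1 d2 t1_def by simp
  have "r s < r t1"
  proof (rule DERIV_pos_imp_increasing_open[OF t1s])
    fix u assume u: "s < u" "u < t1"
    then have "\<bar>u - s\<bar> < d1" "\<bar>u - s\<bar> < d2" using t1_def d1 d2 by auto
    then have Pu: "P u < 0" and ru: "0 < r u" using d1 d2 by auto
    have up: "u > 0" using u sp by simp
    have "- V * P u > 0" using Pu hV by (simp add: mult_pos_neg)
    then have "0 < - V * P u / r u" using ru by (rule divide_pos_pos)
    then show "\<exists>y. DERIV r u :> y \<and> 0 < y" using dr[OF up ru] by blast
  next
    show "continuous_on {s..t1} r" using cont_on[OF sp] cont_r by blast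
  qed
  then have r1: "ra < r t1" using assms(2) by simp
  have "\<bar>t1 - s\<bar> < d1" using t1_def d1 d2 by auto
  then have "P t1 < 0" using d1 by auto
  then have "P t1 < W t1" using W_nonneg[of t1] r1 by simp
  then show ?thesis using r1 t1s by blast
qed

lemma B_lin: assumes "0 < a" "a \<le> b" "\<And>t. a \<le> t \<Longrightarrow> t < b \<Longrightarrow> r t < ra"
  shows "P b - P a = - V * (b - a)" "Q b = Q a"
proof -
  have der: "\<And>u. a < u \<Longrightarrow> u < b \<Longrightarrow> Om u = 0" using assms(3) Om_B by simp
  have cP: "continuous_on {a..b} P" using cont_on[OF assms(1)] cont_P by blast
  have cQ: "continuous_on {a..b} Q" using cont_on[OF assms(1)] cont_Q by blast
  have "P b - P a \<le> (-V) * (b - a)"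
  proof (rule mvt_le[OF assms(2) cP, where f'="\<lambda>u. - V - Om u * Q u"])
    fix u assume "a < u" "u < b"
    then show "(P has_real_derivative - V - Om u * Q u) (at u)" using dP assms(1) by simp
    show "- V - Om u * Q u \<le> - V" using der \<open>a < u\<close> \<open>u < b\<close> by simp
  qed
  moreover have "(-V) * (b - a) \<le> P b - P a"
  proof (rule mvt_ge[OF assms(2) cP, where f'="\<lambda>u. - V - Om u * Q u"])
    fix u assume "a < u" "u < b"
    then show "(P has_real_derivative - V - Om u * Q u) (at u)" using dP assms(1) by simp
    show "- V \<le> - V - Om u * Q u" using der \<open>a < u\<close> \<open>u < b\<close> by simp
  qed
  ultimately show "P b - P a = - V * (b - a)" by simp
  have "Q b - Q a \<le> 0 * (b - a)"
  proof (rule mvt_le[OF assms(2) cQ, where f'="\<lambda>u. Om u * P u"])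
    fix u assume "a < u" "u < b"
    then show "(Q has_real_derivative Om u * P u) (at u)" using dQ assms(1) by simp
    show "Om u * P u \<le> 0" using der \<open>a < u\<close> \<open>u < b\<close> by simp
  qed
  moreover have "0 * (b - a) \<le> Q b - Q a"
  proof (rule mvt_ge[OF assms(2) cQ, where f'="\<lambda>u. Om u * P u"])
    fix u assume "a < u" "u < b"
    then show "(Q has_real_derivative Om u * P u) (at u)" using dQ assms(1) by simp
    show "0 \<le> Om u * P u" using der \<open>a < u\<close> \<open>u < b\<close> by simp
  qed
  ultimately show "Q b = Q a" by simp
qed

lemma phase1: "\<exists>t1\<ge>1. ra < r t1 \<and> P t1 < W t1"
proof (cases "\<exists>t0\<ge>1. r t0 < ra")
  case True
  then obtain t0 where t0: "t0 \<ge> 1" "r t0 < ra" by auto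
  have t0p: "t0 > 0" using t0 by simp
  have ex: "\<exists>t\<ge>t0. ra \<le> r t"
  proof (rule ccontr)
    assume nex: "\<not> (\<exists>t\<ge>t0. ra \<le> r t)"
    have inB: "r t < ra" if "t \<ge> t0" for t using nex that by (meson not_le)
    define T where "T = t0 + 2 * ra / V"
    have T0: "t0 \<le> T" using ra_pos hV T_def by simp
    have "P T - P t0 = - V * (T - t0)"
      by (rule B_lin(1)[OF t0p T0]) (use inB in auto)
    also have "\<dots> = - 2 * ra" using T_def hV by simp
    finally have "P T = P t0 - 2 * ra" by simp
    moreover have "\<bar>P t0\<bar> < ra" using absP[of t0] t0 by simp
    moreover have "\<bar>P T\<bar> < ra" using absP[of T] inB[OF T0] by simp
    ultimately show False by linarith
  qed
  have contr: "\<And>t. t \<ge> t0 \<Longrightarrow> isCont r t" using cont_r t0p by simp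
  from first_time[OF contr t0(2) ex] obtain te where
    te: "te > t0" "r te = ra" "\<forall>t. t0 \<le> t \<and> t < te \<longrightarrow> r t < ra" by auto
  have tt: "t0 \<le> te" using te(1) by simp
  have inb: "\<And>t. t0 \<le> t \<Longrightarrow> t < te \<Longrightarrow> r t < ra" using te(3) by blast
  note lin = B_lin[OF t0p tt inb]
  have "0 < V * (te - t0)" using te(1) hV by simp
  then have "P te < P t0" using lin(1) by simp
  moreover have "(P t0)^2 < (P te)^2"
  proof -
    have "(r t0)^2 < ra^2" using t0(2) r_nonneg[of t0] by (intro power_strict_mono) auto
    then show ?thesis using r_sq[of t0] r_sq[of te] te(2) lin(2) by simp
  qed
  ultimately have Pn: "P te < 0"
  proof -
    assume a1: "P te < P t0" and a2: "(P t0)^2 < (P te)^2"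
    show "P te < 0"
    proof (rule ccontr)
      assume "\<not> P te < 0"
      then have "0 \<le> P te" by simp
      then have "(P te)^2 \<le> (P t0)^2" using a1 by (intro power_mono) auto
      then show False using a2 by simp
    qed
  qed
  have "\<exists>t1>te. ra < r t1 \<and> P t1 < W t1"
    by (rule exitX) (use te t0 Pn in auto)
  then obtain t1 where "t1 > te" "ra < r t1" "P t1 < W t1" by blast
  then show ?thesis using te t0 by (intro exI[of _ t1]) auto
next
  case False
  then have A: "\<And>t. t \<ge> 1 \<Longrightarrow> ra \<le> r t" by (auto simp: not_less)
  show ?thesis
  proof (cases "\<exists>s\<ge>1. r s = ra")
    case True
    then obtain s where s: "s \<ge> 1" "r s = ra" by auto
    have sp: "s > 0" using s by simp
    have rsp: "r s > 0" using s ra_pos by simp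
    have Pns: "P s \<le> 0"
    proof (rule ccontr)
      assume "\<not> P s \<le> 0"
      then have "- V * P s / r s < 0" using hV rsp by (simp add: divide_neg_pos mult_pos_pos)
      from DERIV_neg_dec_right[OF dr[OF sp rsp] this] obtain d where
        d: "d > 0" "\<forall>h>0. h < d \<longrightarrow> r (s + h) < r s" by auto
      have "r (s + d/2) < ra" using d s by auto
      moreover have "ra \<le> r (s + d/2)" using A s d by simp
      ultimately show False by simp
    qed
    show ?thesis
    proof (cases "P s < 0")
      case True
      from exitX[OF s(1) _ True] s obtain t1 where "t1 > s" "ra < r t1" "P t1 < W t1" by auto
      then show ?thesis using s by (intro exI[of _ t1]) auto
    next
      case False
      then have P0: "P s = 0" using Pns by simp
      have Ws: "W s = 0" unfolding W_def using s by simp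
      have "Om s = 0" using Om_A[of s] s P0 Ws by simp
      then have "(P has_real_derivative -V) (at s)" using dP[OF sp] by simp
      from DERIV_neg_dec_right[OF this] hV obtain d where
        d: "d > 0" "\<forall>h>0. h < d \<longrightarrow> P (s + h) < P s" by auto
      have s'1: "s + d/2 \<ge> 1" using s d by simp
      have "P (s + d/2) < 0" using d P0 by simp
      from exitX[OF s'1 A[OF s'1] this] obtain t1 where "t1 > s + d/2" "ra < r t1" "P t1 < W t1" by auto
      then show ?thesis using s'1 by (intro exI[of _ t1]) auto
    qed
  next
    case False
    have A': "ra < r t" if "t \<ge> 1" for t
    proof -
      have "ra \<le> r t" using A that by simp
      moreover have "r t \<noteq> ra" using False that by blast
      ultimately show ?thesis by simp
    qed
    show ?thesis
    proof (rule ccontr)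
      assume nt: "\<not> (\<exists>t1\<ge>1. ra < r t1 \<and> P t1 < W t1)"
      have EW: "W t \<le> P t" if "t \<ge> 1" for t
      proof -
        have "ra < r t" using A' that by blast
        then show ?thesis using nt that by (auto simp: not_less)
      qed
      define T where "T = 1 + W 1 / V + 1"
      have T1: "1 \<le> T" using W_nonneg[OF A[of 1]] hV T_def by simp
      have cW: "continuous_on {1..T} W" using cont_on[of 1] cont_W by simp
      have "W T - W 1 \<le> (-V) * (T - 1)"
      proof (rule mvt_le[OF T1 cW, where f'="\<lambda>u. - V * P u / W u"])
        fix u assume u: "1 < u" "u < T"
        then show "(W has_real_derivative - V * P u / W u) (at u)" using dW A' by simp
        have Wp: "W u > 0" using W_pos A' u by simp
        have "W u \<le> P u" using EW u by simp
        then have "1 \<le> P u / W u" using Wp by simp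
        then have "V * 1 \<le> V * (P u / W u)" using hV by (intro mult_left_mono) auto
        then show "- V * P u / W u \<le> - V" by simp
      qed
      also have "\<dots> = - (W 1 + V)" using T_def hV by (simp add: field_simps)
      finally have "W T \<le> - V" by simp
      then show False using W_nonneg[OF A[OF T1]] hV by simp
    qed
  qed
qed

lemma gder: assumes "u > 0" "ra < r u"
  shows "((\<lambda>s. - (P s - W s) * exp (k * V * s)) has_real_derivative
     exp (k * V * u) * ((W u - P u) * (V / W u + k * V * (1 - Q u / r u)))) (at u)"
proof -
  have rp: "r u > 0" using assms ra_pos by simp
  have Wp: "W u > 0" using W_pos assms by simp
  have "((\<lambda>s. - (P s - W s) * exp (k * V * s)) has_real_derivative
     (- ((- V - Om u * Q u) - (- V * P u / W u))) * exp (k * V * u) + (- (P u - W u)) * (exp (k * V * u) * (k * V))) (at u)"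
    by (auto intro!: derivative_eq_intros dP[OF assms(1)] dW[OF assms] simp: algebra_simps)
  moreover have "(- ((- V - Om u * Q u) - (- V * P u / W u))) * exp (k * V * u) + (- (P u - W u)) * (exp (k * V * u) * (k * V))
     = exp (k * V * u) * ((W u - P u) * (V / W u + k * V * (1 - Q u / r u)))"
  proof -
    have Om: "Om u = k * V * (P u - W u) / r u" using Om_A[of u] assms by simp
    show ?thesis unfolding Om using rp Wp by (simp add: field_simps)
  qed
  ultimately show ?thesis by simp
qed

lemma gder_nonneg: assumes "ra < r u" "P u < W u"
  shows "0 \<le> exp (k * V * u) * ((W u - P u) * (V / W u + k * V * (1 - Q u / r u)))"
proof -
  have rp: "r u > 0" using assms ra_pos by simp
  have Wp: "W u > 0" using W_pos assms by simp
  have "Q u / r u \<le> 1" using absQ[of u] rp by (simp add: divide_le_eq)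
  then have "0 \<le> k * V * (1 - Q u / r u)" using kpos hV by simp
  moreover have "0 \<le> V / W u" using hV Wp by simp
  ultimately have "0 \<le> V / W u + k * V * (1 - Q u / r u)" by simp
  moreover have "0 \<le> W u - P u" using assms by simp
  ultimately show ?thesis by simp
qed

lemma phase2: assumes t1: "t1 \<ge> 1" "ra < r t1" "P t1 < W t1"
  shows "\<forall>t\<ge>t1. ra < r t"
proof (rule ccontr)
  assume "\<not> ?thesis"
  then obtain tb where tb: "tb \<ge> t1" "r tb \<le> ra" by (auto simp: not_less)
  define f where "f t = max (ra - r t) (P t - W t)" for t
  have t1p: "t1 > 0" using t1 by simp
  have contf: "\<And>t. t \<ge> t1 \<Longrightarrow> isCont f t"
    unfolding f_def[abs_def] using t1p by (intro continuous_intros cont_r cont_P cont_W) auto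
  have f1: "f t1 < 0" using t1 f_def by simp
  have ex: "\<exists>t\<ge>t1. 0 \<le> f t" using tb f_def by (intro exI[of _ tb]) auto
  from first_time[OF contf f1 ex] obtain te where
    te: "te > t1" "f te = 0" "\<forall>t. t1 \<le> t \<and> t < te \<longrightarrow> f t < 0" by auto
  have inA: "\<And>t. t1 \<le> t \<Longrightarrow> t < te \<Longrightarrow> ra < r t \<and> P t < W t"
    using te(3) f_def by auto
  define g where "g s = - (P s - W s) * exp (k * V * s)" for s
  have cP: "continuous_on {t1..te} P" using cont_on[OF t1p] cont_P by blast
  have cW: "continuous_on {t1..te} W" using cont_on[OF t1p] cont_W by blast
  have cg: "continuous_on {t1..te} g"
    unfolding g_def[abs_def] by (intro continuous_intros cP cW)
  have "0 * (te - t1) \<le> g te - g t1"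
  proof (rule mvt_ge[OF _ cg, where f'="\<lambda>u. exp (k * V * u) * ((W u - P u) * (V / W u + k * V * (1 - Q u / r u)))"])
    show "t1 \<le> te" using te by simp
    fix u assume u: "t1 < u" "u < te"
    then have h: "ra < r u" "P u < W u" using inA by auto
    have up: "u > 0" using u t1p by simp
    show "(g has_real_derivative exp (k * V * u) * ((W u - P u) * (V / W u + k * V * (1 - Q u / r u)))) (at u)"
      unfolding g_def[abs_def] using gder[OF up h(1)] .
    show "0 \<le> exp (k * V * u) * ((W u - P u) * (V / W u + k * V * (1 - Q u / r u)))"
      using gder_nonneg[OF h] .
  qed
  moreover have "g t1 > 0" unfolding g_def using t1 by simp
  ultimately have "g te > 0" by simp
  then have "0 < (W te - P te) * exp (k * V * te)" unfolding g_def by simp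
  then have Ete: "P te - W te < 0" by (simp add: zero_less_mult_iff)
  then have rte: "r te = ra" using te(2) f_def by (auto simp: max_def split: if_splits)
  then have "W te = 0" unfolding W_def by simp
  then have Pte: "P te < 0" using Ete by simp
  have tep: "te > 0" using te t1p by simp
  have rtp: "r te > 0" using rte ra_pos by simp
  have "- V * P te > 0" using Pte hV by (simp add: mult_pos_neg)
  then have "- V * P te / r te > 0" using rtp by (rule divide_pos_pos)
  from DERIV_pos_inc_left[OF dr[OF tep rtp] this] obtain d where
    d: "d > 0" "\<forall>h>0. h < d \<longrightarrow> r (te - h) < r te" by auto
  define h where "h = min d (te - t1) / 2"
  have hp: "h > 0" "h < d" using d te h_def by auto
  then have "r (te - h) < ra" using d rte by auto
  moreover have "t1 \<le> te - h" "te - h < te" using h_def hp te by auto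
  then have "ra < r (te - h)" using inA by blast
  ultimately show False by simp
qed

definition "Gf \<rho> = (\<rho> * sqrt (\<rho>^2 - ra^2) - ra^2 * ln (\<rho> + sqrt (\<rho>^2 - ra^2))) / 2"

lemma dG: assumes "ra < \<rho>" shows "(Gf has_real_derivative sqrt (\<rho>^2 - ra^2)) (at \<rho>)"
proof -
  have rp: "\<rho> > 0" using assms ra_pos by simp
  have pos: "0 < \<rho>^2 - ra^2" using assms ra_pos by (simp add: power_strict_mono)
  define S where "S = sqrt (\<rho>^2 - ra^2)"
  have Sp: "S > 0" using pos S_def by simp
  have S2: "S^2 = \<rho>^2 - ra^2" using pos S_def by simp
  have lp: "0 < \<rho> + S" using rp Sp by simp
  show ?thesis
    unfolding Gf_def[abs_def]
    apply (auto intro!: derivative_eq_intros simp: pos lp[unfolded S_def])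
    using pos apply simp_all
    unfolding S_def[symmetric]
  proof -
    have e1: "(1 + inverse S * \<rho>) * ra^2 * 2 / (\<rho> + S) = 2 * ra^2 / S"
    proof -
      have "S * (S + \<rho>) > 0" using Sp lp by simp
      then have nz: "S * S + S * \<rho> \<noteq> 0" by (simp add: algebra_simps)
      show ?thesis using Sp lp nz by (simp add: field_simps)
    qed
    have e2: "inverse S * \<rho> * \<rho> * 2 = 2 * \<rho>^2 / S" by (simp add: field_simps power2_eq_square)
    have "2 * \<rho>^2 / S - 2 * ra^2 / S = 2 * (\<rho>^2 - ra^2) / S" by (simp add: right_diff_distrib diff_divide_distrib)
    also have "\<dots> = 2 * S^2 / S" using S2 by simp
    also have "\<dots> = 2 * S" using Sp by (simp add: power2_eq_square)
    finally show "inverse S * \<rho> * \<rho> * 2 - (1 + inverse S * \<rho>) * ra^2 * 2 / (\<rho> + S) = 2 * S"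
      using e1 e2 by simp
  qed
qed

lemma G_lower: assumes "ra \<le> \<rho>" shows "Gf ra + (\<rho> - ra)^2 / 2 \<le> Gf \<rho>"
proof -
  have pos: "\<forall>s\<in>{ra..\<rho>}. s + sqrt (s^2 - ra^2) \<noteq> 0"
  proof
    fix s assume s: "s \<in> {ra..\<rho>}"
    then have "ra^2 \<le> s^2" using ra_pos by (intro power_mono) auto
    then have "0 \<le> sqrt (s^2 - ra^2)" by simp
    moreover have "s > 0" using s ra_pos by simp
    ultimately show "s + sqrt (s^2 - ra^2) \<noteq> 0" by linarith
  qed
  have c: "continuous_on {ra..\<rho>} (\<lambda>s. Gf s - (s - ra)^2 / 2)"
    unfolding Gf_def[abs_def] using pos by (intro continuous_intros) auto
  have "0 * (\<rho> - ra) \<le> (Gf \<rho> - (\<rho> - ra)^2 / 2) - (Gf ra - (ra - ra)^2 / 2)"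
  proof (rule mvt_ge[OF assms c, where f'="\<lambda>s. sqrt (s^2 - ra^2) - (s - ra)"])
    fix s assume s: "ra < s" "s < \<rho>"
    show "((\<lambda>s. Gf s - (s - ra)^2 / 2) has_real_derivative sqrt (s^2 - ra^2) - (s - ra)) (at s)"
      using dG[OF s(1)] by (auto intro!: derivative_eq_intros simp: field_simps)
    have "(s - ra)^2 \<le> s^2 - ra^2"
    proof -
      have "s^2 - ra^2 - (s - ra)^2 = 2 * ra * (s - ra)" by (simp add: power2_eq_square algebra_simps)
      also have "\<dots> \<ge> 0" using s ra_pos by simp
      finally show ?thesis by simp
    qed
    then have "s - ra \<le> sqrt (s^2 - ra^2)" by (rule real_le_rsqrt)
    then show "0 \<le> sqrt (s^2 - ra^2) - (s - ra)" by simp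
  qed
  then show ?thesis by simp
qed

lemma dL: assumes "t > 0" "ra < r t"
  shows "((\<lambda>s. Q s - k * Gf (r s)) has_real_derivative k * V * (P t)^2 / r t) (at t)"
proof -
  have rp: "r t > 0" using assms ra_pos by simp
  have d1: "((\<lambda>s. Gf (r s)) has_real_derivative W t * (- V * P t / r t)) (at t)"
    using DERIV_chain2[OF dG[OF assms(2)] dr[OF assms(1) rp]] unfolding W_def .
  have "((\<lambda>s. Q s - k * Gf (r s)) has_real_derivative Om t * P t - k * (W t * (- V * P t / r t))) (at t)"
    by (rule DERIV_diff[OF dQ[OF assms(1)] DERIV_cmult[OF d1]])
  moreover have "Om t * P t - k * (W t * (- V * P t / r t)) = k * V * (P t)^2 / r t"
  proof -
    have Om: "Om t = k * V * (P t - W t) / r t" using Om_A[of t] assms by simp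
    show ?thesis unfolding Om using rp by (simp add: field_simps power2_eq_square)
  qed
  ultimately show ?thesis by simp
qed

end

locale uav3 = uav +
  fixes t1 :: real
  assumes t1: "t1 \<ge> 1" and inA: "\<And>t. t \<ge> t1 \<Longrightarrow> ra < r t"
begin

definition "L s = Q s - k * Gf (r s)"

lemma t1p: "t1 > 0" using t1 by simp

lemma tp: "t \<ge> t1 \<Longrightarrow> t > 0" using t1 by simp

lemma rpos: "t \<ge> t1 \<Longrightarrow> r t > 0" using inA ra_pos by (meson less_trans)

lemma dL3: "t \<ge> t1 \<Longrightarrow> (L has_real_derivative k * V * (P t)^2 / r t) (at t)"
  unfolding L_def[abs_def] using dL tp inA by blast

lemma L_mono: assumes "t1 \<le> s" "s \<le> t" shows "L s \<le> L t"
proof -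
  have c: "continuous_on {s..t} L"
  proof (intro continuous_at_imp_continuous_on ballI)
    fix u assume "u \<in> {s..t}"
    then have "t1 \<le> u" using assms by simp
    then show "isCont L u" using dL3 DERIV_isCont by blast
  qed
  have "0 * (t - s) \<le> L t - L s"
  proof (rule mvt_ge[OF assms(2) c, where f'="\<lambda>u. k * V * (P u)^2 / r u"])
    fix u assume "s < u" "u < t"
    then have u: "t1 \<le> u" using assms by simp
    show "(L has_real_derivative k * V * (P u)^2 / r u) (at u)" using dL3[OF u] .
    show "0 \<le> k * V * (P u)^2 / r u" using kpos hV rpos[OF u] by simp
  qed
  then show ?thesis by simp
qed

lemma L_upper: assumes "t \<ge> t1" shows "L t \<le> r t - k * Gf ra - k * ((r t - ra)^2 / 2)"
proof -
  have "Gf ra + (r t - ra)^2 / 2 \<le> Gf (r t)" using G_lower inA[OF assms] by simp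
  then have "k * (Gf ra + (r t - ra)^2 / 2) \<le> k * Gf (r t)" using kpos by simp
  moreover have "Q t \<le> r t" using absQ[of t] by simp
  ultimately show ?thesis unfolding L_def by (simp add: algebra_simps)
qed

definition "D = ra - k * Gf ra - L t1"
definition "R = ra + max 1 (2 * (1 + \<bar>D\<bar>) / k)"

lemma r_le_R: assumes "t \<ge> t1" shows "r t \<le> R"
proof -
  define u where "u = r t - ra"
  have u0: "u \<ge> 0" using inA[OF assms] u_def by simp
  have "L t1 \<le> L t" using L_mono assms by simp
  then have ineq: "k * (u^2 / 2) \<le> u + D"
    using L_upper[OF assms] unfolding D_def u_def by simp
  have "u \<le> max 1 (2 * (1 + \<bar>D\<bar>) / k)"
  proof (cases "u \<le> 1")
    case True then show ?thesis by simp
  next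
    case False
    then have u1: "u > 1" by simp
    have "\<bar>D\<bar> \<le> u * \<bar>D\<bar>" using u1 by (simp add: mult_le_cancel_right1)
    then have "k * (u^2 / 2) \<le> u * (1 + \<bar>D\<bar>)" using ineq by (simp add: algebra_simps)
    then have "(k * u / 2) * u \<le> (1 + \<bar>D\<bar>) * u" by (simp add: power2_eq_square algebra_simps)
    then have "k * u / 2 \<le> 1 + \<bar>D\<bar>" using u1 by simp
    then have "u \<le> 2 * (1 + \<bar>D\<bar>) / k" using kpos by (simp add: field_simps)
    then show ?thesis by simp
  qed
  then show ?thesis unfolding R_def u_def by simp
qed

lemma R_ge: "R \<ge> ra + 1" unfolding R_def by simp

lemma L_le: assumes "t \<ge> t1" shows "L t \<le> R - k * Gf ra"
proof -
  have "0 \<le> k * ((r t - ra)^2 / 2)" using kpos by simp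
  then show ?thesis using L_upper[OF assms] r_le_R[OF assms] by simp
qed

lemma L_cauchy: "\<forall>e>0. \<exists>T. \<forall>s t. T \<le> s \<longrightarrow> T \<le> t \<longrightarrow> \<bar>L s - L t\<bar> < e"
proof (intro allI impI)
  fix e :: real assume e: "e > 0"
  define X where "X = L ` {t1..}"
  have ne: "X \<noteq> {}" unfolding X_def by simp
  have bdd: "bdd_above X" unfolding X_def using L_le by (intro bdd_aboveI[of _ "R - k * Gf ra"]) auto
  have "Sup X - e < Sup X" using e by simp
  then obtain l where l: "l \<in> X" "Sup X - e < l" using less_cSup_iff[OF ne bdd] by blast
  then obtain \<tau> where tau: "\<tau> \<ge> t1" "l = L \<tau>" unfolding X_def by auto
  show "\<exists>T. \<forall>s t. T \<le> s \<longrightarrow> T \<le> t \<longrightarrow> \<bar>L s - L t\<bar> < e"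
  proof (intro exI[of _ \<tau>] allI impI)
    fix s t assume st: "\<tau> \<le> s" "\<tau> \<le> t"
    have "L \<tau> \<le> L s" "L \<tau> \<le> L t" using L_mono tau st by auto
    moreover have "L s \<le> Sup X" "L t \<le> Sup X"
      using cSup_upper[OF _ bdd] st tau unfolding X_def by auto
    ultimately show "\<bar>L s - L t\<bar> < e" using l tau by (simp add: abs_diff_less_iff)
  qed
qed

definition "M = V + 2 * k * V * R"

lemma M_ge: "M \<ge> V" "M \<ge> 2 * k * V * R" "M \<ge> 0"
  using kpos hV R_ge ra_pos unfolding M_def by auto

lemma lip_r: "s \<ge> t1 \<Longrightarrow> t \<ge> t1 \<Longrightarrow> \<bar>r s - r t\<bar> \<le> M * \<bar>s - t\<bar>"
proof (rule lip[where f'="\<lambda>u. - V * P u / r u"])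
  fix u assume u: "u \<ge> t1"
  show "(r has_real_derivative - V * P u / r u) (at u)" using dr tp[OF u] rpos[OF u] by blast
  have "\<bar>P u\<bar> / r u \<le> 1" using absP[of u] rpos[OF u] by simp
  then have "V * (\<bar>P u\<bar> / r u) \<le> V * 1" using hV by (intro mult_left_mono) auto
  then have "\<bar>- V * P u / r u\<bar> \<le> V" using hV rpos[OF u] by (simp add: abs_mult abs_divide)
  then show "\<bar>- V * P u / r u\<bar> \<le> M" using M_ge by simp
qed

lemma Om_Q: "t \<ge> t1 \<Longrightarrow> \<bar>Om t * Q t\<bar> \<le> 2 * k * V * R"
proof -
  assume t: "t \<ge> t1"
  have "\<bar>Q t\<bar> \<le> R" using absQ[of t] r_le_R[OF t] by simp
  then have "\<bar>Om t\<bar> * \<bar>Q t\<bar> \<le> (2 * k * V) * R"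
    using Om_bound[of t] kpos hV by (intro mult_mono) auto
  then show ?thesis by (simp add: abs_mult)
qed

lemma Om_P: "t \<ge> t1 \<Longrightarrow> \<bar>Om t * P t\<bar> \<le> 2 * k * V * R"
proof -
  assume t: "t \<ge> t1"
  have "\<bar>P t\<bar> \<le> R" using absP[of t] r_le_R[OF t] by simp
  then have "\<bar>Om t\<bar> * \<bar>P t\<bar> \<le> (2 * k * V) * R"
    using Om_bound[of t] kpos hV by (intro mult_mono) auto
  then show ?thesis by (simp add: abs_mult)
qed

lemma lip_P: "s \<ge> t1 \<Longrightarrow> t \<ge> t1 \<Longrightarrow> \<bar>P s - P t\<bar> \<le> M * \<bar>s - t\<bar>"
proof (rule lip[where f'="\<lambda>u. - V - Om u * Q u"])
  fix u assume u: "u \<ge> t1"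
  show "(P has_real_derivative - V - Om u * Q u) (at u)" using dP tp[OF u] by blast
  have "\<bar>- V - Om u * Q u\<bar> \<le> V + \<bar>Om u * Q u\<bar>" using hV by simp
  then show "\<bar>- V - Om u * Q u\<bar> \<le> M" using Om_Q[OF u] unfolding M_def by simp
qed

lemma lip_Q: "s \<ge> t1 \<Longrightarrow> t \<ge> t1 \<Longrightarrow> \<bar>Q s - Q t\<bar> \<le> M * \<bar>s - t\<bar>"
proof (rule lip[where f'="\<lambda>u. Om u * P u"])
  fix u assume u: "u \<ge> t1"
  show "(Q has_real_derivative Om u * P u) (at u)" using dQ tp[OF u] by blast
  show "\<bar>Om u * P u\<bar> \<le> M" using Om_P[OF u] M_ge by simp
qed

definition "K = {-R..R} \<times> {-R..R} \<times> {ra..R}"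

lemma K_compact: "compact K" unfolding K_def by (intro compact_Times compact_Icc)

lemma inK: "t \<ge> t1 \<Longrightarrow> (P t, Q t, r t) \<in> K"
  unfolding K_def using absP[of t] absQ[of t] r_le_R[of t] inA[of t]
  by (auto simp: abs_le_iff)

lemma K_pos: "z \<in> K \<Longrightarrow> snd (snd z) > 0"
  unfolding K_def using ra_pos by auto

lemma kz: "\<forall>z\<in>K. snd (snd z) \<noteq> 0" using K_pos by (metis less_irrefl)

lemma h1_lim: "((\<lambda>t. k * V * (P t)^2 / r t) \<longlongrightarrow> 0) at_top"
proof -
  define Phi where "Phi z = k * V * (fst z)^2 / snd (snd z)" for z :: "real \<times> real \<times> real"
  have cont: "continuous_on K Phi"
    unfolding Phi_def[abs_def] by (intro continuous_intros kz)
  have uc: "\<forall>e>0. \<exists>d>0. \<forall>s t. t1 \<le> s \<longrightarrow> t1 \<le> t \<longrightarrow> \<bar>s - t\<bar> < d \<longrightarrow>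
           \<bar>Phi (P s, Q s, r s) - Phi (P t, Q t, r t)\<bar> < e"
    by (rule uc_comp[OF cont K_compact inK M_ge(3) lip_P lip_Q lip_r])
  have "((\<lambda>t. Phi (P t, Q t, r t)) \<longlongrightarrow> 0) at_top"
  proof (rule barbalat[OF _ uc L_cauchy])
    fix t assume "t \<ge> t1"
    then show "(L has_real_derivative Phi (P t, Q t, r t)) (at t)" using dL3 Phi_def by simp
  qed
  then show ?thesis unfolding Phi_def by simp
qed

lemma P_lim: "(P \<longlongrightarrow> 0) at_top"
proof -
  have sq: "((\<lambda>t. (P t)^2) \<longlongrightarrow> 0) at_top"
  proof (rule tendsto_sandwich[where f="\<lambda>t. 0" and h="\<lambda>t. (R / (k * V)) * (k * V * (P t)^2 / r t)"])
    show "eventually (\<lambda>t. 0 \<le> (P t)^2) at_top" by simp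
    show "eventually (\<lambda>t. (P t)^2 \<le> (R / (k * V)) * (k * V * (P t)^2 / r t)) at_top"
      unfolding eventually_at_top_linorder
    proof (intro exI[of _ t1] allI impI)
      fix t assume t: "t \<ge> t1"
      have rp: "r t > 0" using rpos[OF t] .
      have e: "(R / (k * V)) * (k * V * (P t)^2 / r t) = (P t)^2 * (R / r t)"
        using kpos hV by (simp add: field_simps)
      have R1: "R / r t \<ge> 1" using r_le_R[OF t] rp by simp
      have "(P t)^2 = (P t)^2 * 1" by simp
      also have "\<dots> \<le> (P t)^2 * (R / r t)"
        using R1 by (intro mult_left_mono) simp_all
      also have "\<dots> = (R / (k * V)) * (k * V * (P t)^2 / r t)" by (rule e[symmetric])
      finally show "(P t)^2 \<le> (R / (k * V)) * (k * V * (P t)^2 / r t)" .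
    qed
    show "((\<lambda>t. 0) \<longlongrightarrow> (0::real)) at_top" by simp
    show "((\<lambda>t. (R / (k * V)) * (k * V * (P t)^2 / r t)) \<longlongrightarrow> 0) at_top"
      by (rule tendsto_mult_right_zero[OF h1_lim])
  qed
  then have "((\<lambda>t. sqrt ((P t)^2)) \<longlongrightarrow> sqrt 0) at_top" by (rule tendsto_real_sqrt)
  then have "((\<lambda>t. \<bar>P t\<bar>) \<longlongrightarrow> 0) at_top" by simp
  then show ?thesis by (simp add: tendsto_rabs_zero_iff)
qed

definition "Phi2 z = - V - k * V * (fst z - sqrt ((snd (snd z))^2 - ra^2)) / snd (snd z) * fst (snd z)"

lemma h2_lim: "((\<lambda>t. Phi2 (P t, Q t, r t)) \<longlongrightarrow> 0) at_top"
proof -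
  have cont: "continuous_on K Phi2"
    unfolding Phi2_def[abs_def] by (intro continuous_intros kz)
  have uc: "\<forall>e>0. \<exists>d>0. \<forall>s t. t1 \<le> s \<longrightarrow> t1 \<le> t \<longrightarrow> \<bar>s - t\<bar> < d \<longrightarrow>
           \<bar>Phi2 (P s, Q s, r s) - Phi2 (P t, Q t, r t)\<bar> < e"
    by (rule uc_comp[OF cont K_compact inK M_ge(3) lip_P lip_Q lip_r])
  have cau: "\<forall>e>0. \<exists>T. \<forall>s t. T \<le> s \<longrightarrow> T \<le> t \<longrightarrow> \<bar>P s - P t\<bar> < e"
  proof (intro allI impI)
    fix e :: real assume e: "e > 0"
    have "eventually (\<lambda>t. dist (P t) 0 < e/2) at_top" using P_lim e by (intro tendstoD) auto
    then obtain T where T: "\<forall>t\<ge>T. \<bar>P t\<bar> < e/2" unfolding eventually_at_top_linorder by auto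
    show "\<exists>T. \<forall>s t. T \<le> s \<longrightarrow> T \<le> t \<longrightarrow> \<bar>P s - P t\<bar> < e"
    proof (intro exI[of _ T] allI impI)
      fix s t assume st: "T \<le> s" "T \<le> t"
      have a: "\<bar>P s\<bar> < e/2" "\<bar>P t\<bar> < e/2" using T st by auto
      then have b: "P s < e/2" "- P s < e/2" "P t < e/2" "- P t < e/2" by (auto simp: abs_less_iff)
      show "\<bar>P s - P t\<bar> < e" unfolding abs_less_iff using b by (intro conjI) linarith+
    qed
  qed
  show ?thesis
  proof (rule barbalat[OF _ uc cau])
    fix t assume t: "t \<ge> t1"
    have "Om t = k * V * (P t - W t) / r t" using Om_A inA[OF t] by simp
    then have "- V - Om t * Q t = Phi2 (P t, Q t, r t)" unfolding Phi2_def W_def by simp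
    then show "(P has_real_derivative Phi2 (P t, Q t, r t)) (at t)" using dP[OF tp[OF t]] by simp
  qed
qed

lemma ev1: "eventually (\<lambda>t. t \<ge> t1) at_top" by (rule eventually_ge_at_top)

lemma final3: "(r \<longlongrightarrow> rd) at_top" "((\<lambda>t. P t / r t) \<longlongrightarrow> 0) at_top"
   "((\<lambda>t. Q t / r t) \<longlongrightarrow> 1) at_top"
proof -
  define c where "c t = Q t / r t" for t
  define A where "A t = k * W t * c t" for t
  have Aeq: "eventually (\<lambda>t. (Phi2 (P t, Q t, r t) + V) / V + k * (P t * c t) = A t) at_top"
    using ev1
  proof (rule eventually_mono)
    fix t assume t: "t \<ge> t1"
    have rp: "r t > 0" using rpos[OF t] .
    show "(Phi2 (P t, Q t, r t) + V) / V + k * (P t * c t) = A t"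
      unfolding Phi2_def A_def c_def W_def using hV rp by (simp add: field_simps)
  qed
  have l1: "((\<lambda>t. (Phi2 (P t, Q t, r t) + V) / V) \<longlongrightarrow> (0 + V) / V) at_top"
    using hV by (intro tendsto_intros h2_lim) auto
  have cb: "eventually (\<lambda>t. \<bar>c t\<bar> \<le> 1) at_top"
    using ev1
  proof (rule eventually_mono)
    fix t assume t: "t \<ge> t1"
    show "\<bar>c t\<bar> \<le> 1" unfolding c_def using absQ[of t] rpos[OF t] by (simp add: abs_divide)
  qed
  have l2: "((\<lambda>t. k * (P t * c t)) \<longlongrightarrow> k * 0) at_top"
    by (intro tendsto_intros lim_zero_bounded[OF P_lim cb])
  have "((\<lambda>t. (Phi2 (P t, Q t, r t) + V) / V + k * (P t * c t)) \<longlongrightarrow> (0 + V) / V + k * 0) at_top"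
    by (rule tendsto_add[OF l1 l2])
  then have Alim: "(A \<longlongrightarrow> 1) at_top" using tendsto_cong[OF Aeq] hV by simp
  have ib: "eventually (\<lambda>t. \<bar>1 / r t\<bar> \<le> 1 / ra) at_top"
    using ev1
  proof (rule eventually_mono)
    fix t assume t: "t \<ge> t1"
    show "\<bar>1 / r t\<bar> \<le> 1 / ra" using inA[OF t] ra_pos rpos[OF t] by (simp add: frac_le)
  qed
  have Prlim: "((\<lambda>t. P t / r t) \<longlongrightarrow> 0) at_top"
    using lim_zero_bounded[OF P_lim ib] by simp
  then show "((\<lambda>t. P t / r t) \<longlongrightarrow> 0) at_top" .
  have c2eq: "eventually (\<lambda>t. 1 - (P t / r t)^2 = (c t)^2) at_top"
    using ev1
  proof (rule eventually_mono)
    fix t assume t: "t \<ge> t1"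
    have rp: "r t > 0" using rpos[OF t] .
    have "1 - (P t / r t)^2 = ((r t)^2 - (P t)^2) / (r t)^2"
      using rp by (simp add: field_simps power_divide)
    also have "\<dots> = (Q t)^2 / (r t)^2" using r_sq[of t] by simp
    also have "\<dots> = (c t)^2" unfolding c_def by (simp add: power_divide)
    finally show "1 - (P t / r t)^2 = (c t)^2" .
  qed
  have "((\<lambda>t. 1 - (P t / r t)^2) \<longlongrightarrow> 1 - 0^2) at_top"
    by (intro tendsto_intros Prlim)
  then have c2lim: "((\<lambda>t. (c t)^2) \<longlongrightarrow> 1) at_top" using tendsto_cong[OF c2eq] by simp
  have c2pos: "eventually (\<lambda>t. (c t)^2 > 0) at_top"
    using order_tendstoD(1)[OF c2lim, of 0] by simp
  have kWeq: "eventually (\<lambda>t. (A t)^2 / (c t)^2 = (k * W t)^2) at_top"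
    using c2pos
  proof (rule eventually_mono)
    fix t assume "(c t)^2 > 0"
    then show "(A t)^2 / (c t)^2 = (k * W t)^2" unfolding A_def by (simp add: power_mult_distrib)
  qed
  have "((\<lambda>t. (A t)^2 / (c t)^2) \<longlongrightarrow> 1^2 / 1) at_top"
    by (intro tendsto_intros Alim c2lim) simp
  then have kW2: "((\<lambda>t. (k * W t)^2) \<longlongrightarrow> 1) at_top" using tendsto_cong[OF kWeq] by simp
  have kWeq2: "eventually (\<lambda>t. sqrt ((k * W t)^2) = k * W t) at_top"
    using ev1
  proof (rule eventually_mono)
    fix t assume t: "t \<ge> t1"
    have "W t > 0" using W_pos inA[OF t] by simp
    then show "sqrt ((k * W t)^2) = k * W t" using kpos by simp
  qed
  have "((\<lambda>t. sqrt ((k * W t)^2)) \<longlongrightarrow> sqrt 1) at_top" by (intro tendsto_intros kW2)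
  then have kW: "((\<lambda>t. k * W t) \<longlongrightarrow> 1) at_top" using tendsto_cong[OF kWeq2] by simp
  have req: "eventually (\<lambda>t. sqrt (((k * W t) / k)^2 + ra^2) = r t) at_top"
    using ev1
  proof (rule eventually_mono)
    fix t assume t: "t \<ge> t1"
    have "ra^2 < (r t)^2" using inA[OF t] ra_pos by (intro power_strict_mono) auto
    then have "(W t)^2 = (r t)^2 - ra^2" unfolding W_def by simp
    then show "sqrt (((k * W t) / k)^2 + ra^2) = r t" using kpos rpos[OF t] by simp
  qed
  have "((\<lambda>t. sqrt (((k * W t) / k)^2 + ra^2)) \<longlongrightarrow> sqrt ((1 / k)^2 + ra^2)) at_top"
    using kpos by (intro tendsto_intros kW) auto
  moreover have "sqrt ((1 / k)^2 + ra^2) = rd" using ra_sq hrd by (simp add: power_divide)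
  ultimately show "(r \<longlongrightarrow> rd) at_top" using tendsto_cong[OF req] by simp
  have ceq: "eventually (\<lambda>t. A t / (k * W t) = c t) at_top"
    using ev1
  proof (rule eventually_mono)
    fix t assume t: "t \<ge> t1"
    have "W t > 0" using W_pos inA[OF t] by simp
    then show "A t / (k * W t) = c t" unfolding A_def using kpos by simp
  qed
  have "((\<lambda>t. A t / (k * W t)) \<longlongrightarrow> 1 / 1) at_top" by (intro tendsto_intros Alim kW) simp
  then show "((\<lambda>t. Q t / r t) \<longlongrightarrow> 1) at_top" using tendsto_cong[OF ceq] unfolding c_def by simp
qed

lemma bear_eq: assumes rp: "r t > 0"
  shows "bearing xT yT (x t) (y t) (psi t) =
    (let a = Arg (Complex (P t / r t) (Q t / r t)) in if a < 0 then a + 2 * pi else a)"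
proof -
  have r2: "(r t)^2 = (xT - x t)^2 + (yT - y t)^2"
    unfolding r_def uav_range_def by (simp add: power2_commute)
  have "cis (psi t) / Complex (xT - x t) (yT - y t) = complex_of_real (1 / r t) * Complex (P t / r t) (Q t / r t)"
  proof (rule complex_eqI)
    have "Re (cis (psi t) / Complex (xT - x t) (yT - y t)) =
        (cos (psi t) * (xT - x t) + sin (psi t) * (yT - y t)) / ((xT - x t)^2 + (yT - y t)^2)"
      by (simp add: Re_divide)
    also have "\<dots> = P t / (r t)^2" unfolding P_def r2 by (simp add: mult.commute)
    also have "\<dots> = (1 / r t) * (P t / r t)" by (simp add: power2_eq_square)
    also have "\<dots> = Re (complex_of_real (1 / r t) * Complex (P t / r t) (Q t / r t))" by simp
    finally show "Re (cis (psi t) / Complex (xT - x t) (yT - y t)) = Re (complex_of_real (1 / r t) * Complex (P t / r t) (Q t / r t))" .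
    have "Im (cis (psi t) / Complex (xT - x t) (yT - y t)) =
        (sin (psi t) * (xT - x t) - cos (psi t) * (yT - y t)) / ((xT - x t)^2 + (yT - y t)^2)"
      by (simp add: Im_divide)
    also have "\<dots> = Q t / (r t)^2" unfolding Q_def r2 by (simp add: mult.commute)
    also have "\<dots> = (1 / r t) * (Q t / r t)" by (simp add: power2_eq_square)
    also have "\<dots> = Im (complex_of_real (1 / r t) * Complex (P t / r t) (Q t / r t))" by simp
    finally show "Im (cis (psi t) / Complex (xT - x t) (yT - y t)) = Im (complex_of_real (1 / r t) * Complex (P t / r t) (Q t / r t))" .
  qed
  then have "Arg (cis (psi t) / Complex (xT - x t) (yT - y t)) = Arg (Complex (P t / r t) (Q t / r t))"
    using rp by simp
  then show ?thesis unfolding bearing_def by simp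
qed

lemma bear_lim: "((\<lambda>t. bearing xT yT (x t) (y t) (psi t)) \<longlongrightarrow> pi / 2) at_top"
proof -
  have zl: "((\<lambda>t. Complex (P t / r t) (Q t / r t)) \<longlongrightarrow> Complex 0 1) at_top"
    by (intro tendsto_Complex final3)
  have ii: "Complex 0 1 = \<i>" by (simp add: complex_eq_iff)
  have ca: "isCont Arg \<i>" by (rule continuous_at_Arg) (simp add: complex_nonpos_Reals_iff)
  have al: "((\<lambda>t. Arg (Complex (P t / r t) (Q t / r t))) \<longlongrightarrow> pi / 2) at_top"
    using isCont_tendsto_compose[OF ca zl[unfolded ii]] by simp
  have apos: "eventually (\<lambda>t. Arg (Complex (P t / r t) (Q t / r t)) > 0) at_top"
    using order_tendstoD(1)[OF al, of 0] by simp
  have ev: "eventually (\<lambda>t. Arg (Complex (P t / r t) (Q t / r t)) = bearing xT yT (x t) (y t) (psi t)) at_top"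
    using eventually_conj[OF apos ev1]
  proof (rule eventually_mono)
    fix t assume h: "Arg (Complex (P t / r t) (Q t / r t)) > 0 \<and> t \<ge> t1"
    then show "Arg (Complex (P t / r t) (Q t / r t)) = bearing xT yT (x t) (y t) (psi t)"
      using bear_eq[OF rpos] by (simp add: Let_def)
  qed
  show ?thesis using tendsto_cong[OF ev] al by simp
qed

end

context uav begin

lemma main: "((\<lambda>t. uav_range xT yT (x t) (y t)) \<longlongrightarrow> rd) at_top
       \<and> ((\<lambda>t. bearing xT yT (x t) (y t) (psi t)) \<longlongrightarrow> pi / 2) at_top"
proof -
  obtain t1 where t1: "t1 \<ge> 1" "ra < r t1" "P t1 < W t1" using phase1 by blast
  have A: "\<forall>t\<ge>t1. ra < r t" using phase2[OF t1] .
  interpret u3: uav3 V rd k xT yT x y psi rdot t1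
    by (unfold_locales) (use t1 A in auto)
  show ?thesis using u3.final3(1) u3.bear_lim unfolding r_def[abs_def] by simp
qed

end

theorem theorem1:
  fixes V rd k xT yT :: real
    and x y psi rdot :: "real \<Rightarrow> real"
  assumes hV: "V > 0"
    and hrd: "rd > 0"
    and hk: "k > 1 / rd"
    and hrdot: "\<forall>t\<ge>0. uav_range xT yT (x t) (y t) > 0 \<longrightarrow>
        ((\<lambda>s. uav_range xT yT (x s) (y s)) has_real_derivative rdot t) (at t within {0..})"
    and hx: "\<forall>t\<ge>0. (x has_real_derivative V * cos (psi t)) (at t within {0..})"
    and hy: "\<forall>t\<ge>0. (y has_real_derivative V * sin (psi t)) (at t within {0..})"
    and hpsi: "\<forall>t\<ge>0. (psi has_real_derivative
        control V k rd (uav_range xT yT (x t) (y t)) (rdot t)) (at t within {0..})"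
  shows "((\<lambda>t. uav_range xT yT (x t) (y t)) \<longlongrightarrow> rd) at_top
       \<and> ((\<lambda>t. bearing xT yT (x t) (y t) (psi t)) \<longlongrightarrow> pi / 2) at_top"
proof -
  have "uav V rd k xT yT x y psi rdot"
    by (unfold_locales) (use assms in auto)
  then show ?thesis by (rule uav.main)
qed
end
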